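(* Let $n$ be a nonnegative integer and $a,b\in\mathbb{C}$ such that all expressions below are defined (no lower parameter zero or a negative integer). Then \[ \left[{}_3F_2\!\left(\left.{-\frac{b}{2}-n,\frac{1-b}{2}-n,-a-2n \atop -b-2n,1-b-n}\right| 4\right)\right]_n =\frac{(-1)^n(1+a)_{2n}}{n!\,(1+a)_n}\,{}_4F_3\!\left(\left.{-n,\frac{1+a-b}{2},\frac{2+a-b}{2},1 \atop 1+a-b,1-b-n,1+a+n}\right| 4\right). \]
   Context: For $a\in\mathbb{C}$, $(a)_0=1$ and $(a)_k=a(a+1)\cdots(a+k-1)$ for $k\ge1$. The hypergeometric series is ${}_rF_s\!\left(\left.{\alpha_1,\ldots,\alpha_r\atop \beta_1,\ldots,\beta_s}\right|z\right)=\sum_{k\ge0}\frac{(\alpha_1)_k\cdots(\alpha_r)_k}{k!(\beta_1)_k\cdots(\beta_s)_k}z^k$, with no lower parameter zero or a negative integer; it is a finite sum when an upper parameter is $-n$. The bracket $\left[{}_rF_s(\cdots|z)\right]_n$ denotes the sum of the first $n+1$ terms, $\sum_{k=0}^{n}\frac{(\alpha_1)_k\cdots(\alpha_r)_k}{k!(\beta_1)_k\cdots(\beta_s)_k}z^k$. *)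

theory Defs
  imports Complex_Main
begin

definition hyp_term :: "complex list \<Rightarrow> complex list \<Rightarrow> complex \<Rightarrow> nat \<Rightarrow> complex" where
  "hyp_term as bs z k =
     (\<Prod>a\<leftarrow>as. pochhammer a k) / (fact k * (\<Prod>b\<leftarrow>bs. pochhammer b k)) * z ^ k"

definition hypF :: "complex list \<Rightarrow> complex list \<Rightarrow> complex \<Rightarrow> complex" where
  "hypF as bs z = (\<Sum>k. hyp_term as bs z k)"

text \<open>Truncation [rFs(...|z)]_n: sum of the first n+1 terms.\<close>
definition hypF_trunc :: "complex list \<Rightarrow> complex list \<Rightarrow> complex \<Rightarrow> nat \<Rightarrow> complex" where
  "hypF_trunc as bs z n = (\<Sum>k\<le>n. hyp_term as bs z k)"

definition nonpos_integer :: "complex \<Rightarrow> bool" where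
  "nonpos_integer c \<longleftrightarrow> (\<exists>m::nat. c = - of_nat m)"

end

theory Submission imports Defs "HOL-Computational_Algebra.Formal_Power_Series" begin

lemma V:
  fixes a c :: complex
  assumes "pochhammer c m \<noteq> 0"
  shows "(\<Sum>i\<le>m. pochhammer a i * pochhammer (- of_nat m) i / (fact i * pochhammer c i))
         = pochhammer (c - a) m / pochhammer c m"
proof -
  have "\<forall>i \<in> {0..< m}. c \<noteq> - of_nat i" using assms by (auto simp: pochhammer_eq_0_iff)
  from Vandermonde_pochhammer[OF this, of a] show ?thesis
    by (simp add: atLeast0AtMost)
qed

lemma reindex_tri:
  fixes h :: "nat \<Rightarrow> nat \<Rightarrow> 'a::comm_monoid_add"
  shows "(\<Sum>k\<le>n. \<Sum>i\<le>k. h k i) = (\<Sum>j\<le>n. \<Sum>i\<le>n-j. h (i+j) i)"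
proof -
  have "(\<Sum>(i,j)\<in>{(i,j). i+j \<le> n}. h (i+j) i) = (\<Sum>k\<le>n. \<Sum>i\<le>k. h (i + (k-i)) i)"
    by (rule sum.triangle_reindex_eq)
  also have "\<dots> = (\<Sum>k\<le>n. \<Sum>i\<le>k. h k i)"
    by (intro sum.cong refl) auto
  finally have 1: "(\<Sum>(i,j)\<in>{(i,j). i+j \<le> n}. h (i+j) i) = (\<Sum>k\<le>n. \<Sum>i\<le>k. h k i)" .
  have "(\<Sum>j\<le>n. \<Sum>i\<le>n-j. h (i+j) i) = (\<Sum>(j,i)\<in>(SIGMA j:{..n}. {..n-j}). h (i+j) i)"
    by (rule sum.Sigma) auto
  also have "\<dots> = (\<Sum>(i,j)\<in>{(i,j). i+j \<le> n}. h (i+j) i)"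
    by (rule sum.reindex_bij_witness[where i="\<lambda>(i,j). (j,i)" and j="\<lambda>(j,i). (i,j)"]) auto
  finally show ?thesis using 1 by simp
qed

lemma termwise:
  fixes N B :: complex
  assumes "i + j \<le> n"
  shows "pochhammer (-N) j / fact j * (pochhammer (of_nat j - N) i * pochhammer (- of_nat (n-j)) i / (fact i * pochhammer B i))
   = pochhammer (-N) (i+j) / fact (i+j) * (pochhammer (of_nat (n-(i+j)+1)) i * pochhammer (- of_nat (i+j)) i / (fact i * pochhammer B i))"
proof -
  have p1: "pochhammer (-N) (i+j) = pochhammer (-N) j * pochhammer (of_nat j - N) i"
    using pochhammer_product'[of "-N" j i] by (simp add: add.commute)
  have p2: "pochhammer (- of_nat (n-j)) i = (-1)^i * pochhammer (of_nat (n-(i+j)+1) :: complex) i"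
    proof -
    have e: "(of_nat (n-(i+j)+1) :: complex) = of_nat (n-j) - of_nat i + 1" using assms by (simp add: of_nat_diff)
    show ?thesis unfolding e using pochhammer_minus[of "of_nat (n-j) :: complex" i] assms by (simp add: of_nat_diff)
  qed
  have p3: "pochhammer (- of_nat (i+j)) i = (-1)^i * pochhammer (of_nat j + 1 :: complex) i"
    using pochhammer_minus[of "of_nat (i+j) :: complex" i] by simp
  have p4: "(fact (i+j) :: complex) = fact j * pochhammer (of_nat j + 1) i"
    using pochhammer_product'[of "1::complex" j i] by (simp add: pochhammer_fact add.commute add_ac)
  have nz: "pochhammer (of_nat j + 1 :: complex) i \<noteq> 0"
  proof -
    have "pochhammer (of_nat j + 1 :: complex) i = of_nat (pochhammer (Suc j) i)"
      by (metis of_nat_Suc add.commute pochhammer_of_nat)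
    moreover have "pochhammer (Suc j) i > 0" by (simp add: pochhammer_pos)
    ultimately show ?thesis by simp
  qed
  show ?thesis unfolding p1 p2 p3 p4 using nz by (simp add: field_simps)
qed

lemma core:
  fixes N B :: complex
  assumes nz: "pochhammer B n \<noteq> 0"
  shows "(\<Sum>k\<le>n. pochhammer (-N) k / fact k * (pochhammer (B - 1 - of_nat n + of_nat k) k / pochhammer B k))
       = (\<Sum>j\<le>n. pochhammer (-N) j / fact j * (pochhammer (N + B - of_nat j) (n-j) / pochhammer B (n-j)))"
proof -
  define h where "h = (\<lambda>k i. pochhammer (-N) k / fact k * (pochhammer (of_nat (n-k+1)) i * pochhammer (- of_nat k) i / (fact i * pochhammer B i)))"
  have L: "pochhammer (B - 1 - of_nat n + of_nat k) k / pochhammer B k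
        = (\<Sum>i\<le>k. pochhammer (of_nat (n-k+1)) i * pochhammer (- of_nat k) i / (fact i * pochhammer B i))"
    if "k \<le> n" for k
  proof -
    have "pochhammer B k \<noteq> 0" using nz pochhammer_neq_0_mono that by blast
    from V[OF this, of "of_nat (n-k+1)"] show ?thesis using that by (simp add: of_nat_diff algebra_simps)
  qed
  have R: "pochhammer (N + B - of_nat j) (n-j) / pochhammer B (n-j)
        = (\<Sum>i\<le>n-j. pochhammer (of_nat j - N) i * pochhammer (- of_nat (n-j)) i / (fact i * pochhammer B i))"
    if "j \<le> n" for j
  proof -
    have "pochhammer B (n-j) \<noteq> 0" using nz pochhammer_neq_0_mono by (metis diff_le_self)
    from V[OF this, of "of_nat j - N"] show ?thesis by (simp add: algebra_simps)
  qed
  have "(\<Sum>k\<le>n. pochhammer (-N) k / fact k * (pochhammer (B - 1 - of_nat n + of_nat k) k / pochhammer B k))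
      = (\<Sum>k\<le>n. \<Sum>i\<le>k. h k i)"
    by (intro sum.cong refl) (simp add: L h_def sum_distrib_left)
  also have "\<dots> = (\<Sum>j\<le>n. \<Sum>i\<le>n-j. h (i+j) i)" by (rule reindex_tri)
  also have "\<dots> = (\<Sum>j\<le>n. \<Sum>i\<le>n-j. pochhammer (-N) j / fact j * (pochhammer (of_nat j - N) i * pochhammer (- of_nat (n-j)) i / (fact i * pochhammer B i)))"
    unfolding h_def by (intro sum.cong refl, subst termwise) auto
  also have "\<dots> = (\<Sum>j\<le>n. pochhammer (-N) j / fact j * (pochhammer (N + B - of_nat j) (n-j) / pochhammer B (n-j)))"
    by (intro sum.cong refl) (simp add: R sum_distrib_left)
  finally show ?thesis .
qed

lemma rhs_term:
  fixes a b :: complex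
  assumes kn: "k \<le> n" and nzA: "pochhammer (1 + a + of_nat n) k \<noteq> 0"
  shows "pochhammer (-(a + 2 * of_nat n)) (n-k) / fact (n-k) * (pochhammer ((a + 2 * of_nat n) + (1 - b - of_nat n) - of_nat (n-k)) (n-(n-k)) / pochhammer (1 - b - of_nat n) (n-(n-k)))
    = (-1)^n * pochhammer (1 + a + of_nat n) n / fact n *
      (pochhammer (- of_nat n) k * pochhammer (1 + a - b + of_nat k) k / (pochhammer (1 - b - of_nat n) k * pochhammer (1 + a + of_nat n) k))"
proof -
  have e1: "n - (n-k) = k" using kn by simp
  have e2: "(a + 2 * of_nat n) + (1 - b - of_nat n) - of_nat (n-k) = 1 + a - b + of_nat k"
    using kn by (simp add: of_nat_diff algebra_simps)
  have e3: "pochhammer (-(a + 2 * of_nat n)) (n-k) = (-1)^(n-k) * pochhammer (1 + a + of_nat n + of_nat k) (n-k)"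
  proof -
    have q: "a + 2 * of_nat n - of_nat (n-k) + 1 = 1 + a + of_nat n + of_nat k" using kn by (simp add: of_nat_diff algebra_simps)
    show ?thesis using pochhammer_minus[of "a + 2 * of_nat n" "n-k"] unfolding q by simp
  qed
  have e4: "pochhammer (1 + a + of_nat n) n = pochhammer (1 + a + of_nat n) k * pochhammer (1 + a + of_nat n + of_nat k) (n-k)"
    using pochhammer_product[OF kn, of "1 + a + of_nat n"] by simp
  have e5: "pochhammer (- of_nat n :: complex) k = (-1)^k * pochhammer (of_nat (n-k) + 1) k"
    using pochhammer_minus[of "of_nat n :: complex" k] kn by (simp add: of_nat_diff algebra_simps)
  have e6: "(fact n :: complex) = fact (n-k) * pochhammer (of_nat (n-k) + 1) k"
    using pochhammer_product'[of "1::complex" "n-k" k] kn by (simp add: pochhammer_fact add_ac)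
  have nz6: "pochhammer (of_nat (n-k) + 1 :: complex) k \<noteq> 0"
  proof -
    have "pochhammer (of_nat (n-k) + 1 :: complex) k = of_nat (pochhammer (Suc (n-k)) k)"
      by (metis of_nat_Suc add.commute pochhammer_of_nat)
    moreover have "pochhammer (Suc (n-k)) k > 0" by (simp add: pochhammer_pos)
    ultimately show ?thesis by simp
  qed
  have sg: "(-1::complex)^n = (-1)^(n-k) * (-1)^k" using kn by (simp add: power_add[symmetric])
  show ?thesis unfolding e1 e2 e3 e4 e5 e6 sg using nzA nz6 by (simp add: field_simps)
qed

lemma nonpos_pochhammer:
  assumes "\<not> nonpos_integer c" shows "pochhammer c k \<noteq> 0"
  using assms unfolding nonpos_integer_def by (auto simp: pochhammer_eq_0_iff)

theorem mainTheorem11: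
  fixes n :: nat and a b :: complex
  assumes "\<not> nonpos_integer (- b - 2 * of_nat n)"
    and "\<not> nonpos_integer (1 - b - of_nat n)"
    and "\<not> nonpos_integer (1 + a - b)"
    and "\<not> nonpos_integer (1 + a + of_nat n)"
    and "pochhammer (1 + a) n \<noteq> 0"
  shows "hypF_trunc [- b / 2 - of_nat n, (1 - b) / 2 - of_nat n, - a - 2 * of_nat n]
                    [- b - 2 * of_nat n, 1 - b - of_nat n] 4 n
       = (-1) ^ n * pochhammer (1 + a) (2 * n) / (fact n * pochhammer (1 + a) n)
         * hypF [- of_nat n, (1 + a - b) / 2, (2 + a - b) / 2, 1]
                [1 + a - b, 1 - b - of_nat n, 1 + a + of_nat n] 4"
proof -
  define B where "B = 1 - b - of_nat n"
  define N where "N = a + 2 * of_nat n"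
  have nz1: "\<And>k. pochhammer (- b - 2 * of_nat n) k \<noteq> 0" using assms(1) by (rule nonpos_pochhammer)
  have nz2: "\<And>k. pochhammer B k \<noteq> 0" unfolding B_def using assms(2) by (rule nonpos_pochhammer)
  have nz3: "\<And>k. pochhammer (1 + a - b) k \<noteq> 0" using assms(3) by (rule nonpos_pochhammer)
  have nz4: "\<And>k. pochhammer (1 + a + of_nat n) k \<noteq> 0" using assms(4) by (rule nonpos_pochhammer)
  have lt: "hyp_term [- b / 2 - of_nat n, (1 - b) / 2 - of_nat n, - a - 2 * of_nat n]
                    [- b - 2 * of_nat n, 1 - b - of_nat n] 4 k
     = pochhammer (-N) k / fact k * (pochhammer (B - 1 - of_nat n + of_nat k) k / pochhammer B k)" for k
  proof -
    have d: "pochhammer (- b / 2 - of_nat n) k * pochhammer ((1 - b) / 2 - of_nat n) k * 4^k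
          = pochhammer (- b - 2 * of_nat n) (2*k)"
    proof -
      have q1: "2 * (- b / 2 - of_nat n) = - b - 2 * of_nat n" by (simp add: field_simps)
      have q2: "- b / 2 - of_nat n + 1/2 = (1 - b) / 2 - of_nat n" by (simp add: field_simps)
      have q3: "(of_nat (2^(2*k)) :: complex) = 4^k" by (simp add: power_mult)
      have "pochhammer (2 * (- b / 2 - of_nat n)) (2 * k) = of_nat (2^(2*k)) * pochhammer (- b / 2 - of_nat n) k * pochhammer (- b / 2 - of_nat n + 1/2) k"
        by (rule pochhammer_double)
      then show ?thesis unfolding q1 q2 q3 by (simp only: mult_ac)
    qed
    have p: "pochhammer (- b - 2 * of_nat n) (2*k) = pochhammer (- b - 2 * of_nat n) k * pochhammer (B - 1 - of_nat n + of_nat k) k"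
    proof -
      have e: "B - 1 - of_nat n + of_nat k = - b - 2 * of_nat n + of_nat k" unfolding B_def by simp
      show ?thesis unfolding e mult_2 by (rule pochhammer_product')
    qed
    have alg: "(X * P) * M / (F * (X * Y)) = M / F * (P / Y)"
      if "X \<noteq> 0" "Y \<noteq> 0" "F \<noteq> 0" for X Y P M F :: complex
      using that by (simp add: field_simps)
    have "hyp_term [- b / 2 - of_nat n, (1 - b) / 2 - of_nat n, - a - 2 * of_nat n]
                    [- b - 2 * of_nat n, 1 - b - of_nat n] 4 k
       = (pochhammer (- b / 2 - of_nat n) k * pochhammer ((1 - b) / 2 - of_nat n) k * 4^k) * pochhammer (-(a + 2 * of_nat n)) k
          / (fact k * (pochhammer (- b - 2 * of_nat n) k * pochhammer (1 - b - of_nat n) k))"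
      unfolding hyp_term_def by (simp add: mult_ac)
    also have "\<dots> = pochhammer (-N) k / fact k * (pochhammer (B - 1 - of_nat n + of_nat k) k / pochhammer B k)"
      unfolding d p N_def B_def[symmetric] by (rule alg[OF nz1 nz2]) simp
    finally show ?thesis .
  qed
  have rt: "hyp_term [- of_nat n, (1 + a - b) / 2, (2 + a - b) / 2, 1]
                [1 + a - b, 1 - b - of_nat n, 1 + a + of_nat n] 4 k
     = pochhammer (- of_nat n) k * pochhammer (1 + a - b + of_nat k) k / (pochhammer B k * pochhammer (1 + a + of_nat n) k)" for k
  proof -
    have d: "pochhammer ((1 + a - b) / 2) k * pochhammer ((2 + a - b) / 2) k * 4^k
          = pochhammer (1 + a - b) (2*k)"
    proof -
      have q1: "2 * ((1 + a - b) / 2) = 1 + a - b" by (simp add: field_simps)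
      have q2: "(1 + a - b) / 2 + 1/2 = (2 + a - b) / 2" by (simp add: field_simps)
      have q3: "(of_nat (2^(2*k)) :: complex) = 4^k" by (simp add: power_mult)
      have "pochhammer (2 * ((1 + a - b) / 2)) (2 * k) = of_nat (2^(2*k)) * pochhammer ((1 + a - b) / 2) k * pochhammer ((1 + a - b) / 2 + 1/2) k"
        by (rule pochhammer_double)
      then show ?thesis unfolding q1 q2 q3 by (simp only: mult_ac)
    qed
    have p: "pochhammer (1 + a - b) (2*k) = pochhammer (1 + a - b) k * pochhammer (1 + a - b + of_nat k) k"
      unfolding mult_2 by (rule pochhammer_product')
    have alg: "M * (X * P) * F / (F * (X * Y * Z)) = M * P / (Y * Z)"
      if "X \<noteq> 0" "F \<noteq> 0" for X Y P Z M F :: complex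
      using that by (simp add: field_simps)
    have "hyp_term [- of_nat n, (1 + a - b) / 2, (2 + a - b) / 2, 1]
                [1 + a - b, 1 - b - of_nat n, 1 + a + of_nat n] 4 k
       = pochhammer (- of_nat n) k * (pochhammer ((1 + a - b) / 2) k * pochhammer ((2 + a - b) / 2) k * 4^k) * fact k
          / (fact k * (pochhammer (1 + a - b) k * pochhammer (1 - b - of_nat n) k * pochhammer (1 + a + of_nat n) k))"
      unfolding hyp_term_def by (simp add: mult_ac pochhammer_fact)
    also have "\<dots> = pochhammer (- of_nat n) k * pochhammer (1 + a - b + of_nat k) k / (pochhammer B k * pochhammer (1 + a + of_nat n) k)"
      unfolding d p B_def[symmetric] by (rule alg[OF nz3]) simp
    finally show ?thesis .
  qed
  have hF: "hypF [- of_nat n, (1 + a - b) / 2, (2 + a - b) / 2, 1]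
                [1 + a - b, 1 - b - of_nat n, 1 + a + of_nat n] 4
      = (\<Sum>k\<le>n. pochhammer (- of_nat n) k * pochhammer (1 + a - b + of_nat k) k / (pochhammer B k * pochhammer (1 + a + of_nat n) k))"
    unfolding hypF_def rt
    by (rule suminf_finite) (auto simp: pochhammer_of_nat_eq_0_iff)
  have pre: "(-1) ^ n * pochhammer (1 + a) (2 * n) / (fact n * pochhammer (1 + a) n)
       = (-1)^n * pochhammer (1 + a + of_nat n) n / fact n"
  proof -
    have "pochhammer (1 + a) (2 * n) = pochhammer (1 + a) n * pochhammer (1 + a + of_nat n) n"
      using pochhammer_product'[of "1 + a" n n] by (simp add: mult_2)
    then show ?thesis using assms(5) by simp
  qed
  have "hypF_trunc [- b / 2 - of_nat n, (1 - b) / 2 - of_nat n, - a - 2 * of_nat n]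
                    [- b - 2 * of_nat n, 1 - b - of_nat n] 4 n
      = (\<Sum>k\<le>n. pochhammer (-N) k / fact k * (pochhammer (B - 1 - of_nat n + of_nat k) k / pochhammer B k))"
    unfolding hypF_trunc_def lt ..
  also have "\<dots> = (\<Sum>j\<le>n. pochhammer (-N) j / fact j * (pochhammer (N + B - of_nat j) (n-j) / pochhammer B (n-j)))"
    by (rule core) (rule nz2)
  also have "\<dots> = (\<Sum>k\<le>n. pochhammer (-N) (n-k) / fact (n-k) * (pochhammer (N + B - of_nat (n-k)) (n-(n-k)) / pochhammer B (n-(n-k))))"
    by (rule sum.reindex_bij_witness[where i="\<lambda>k. n-k" and j="\<lambda>k. n-k"]) auto
  also have "\<dots> = (\<Sum>k\<le>n. (-1)^n * pochhammer (1 + a + of_nat n) n / fact n *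
      (pochhammer (- of_nat n) k * pochhammer (1 + a - b + of_nat k) k / (pochhammer B k * pochhammer (1 + a + of_nat n) k)))"
    unfolding N_def B_def by (intro sum.cong refl rhs_term nz4) auto
  also have "\<dots> = (-1) ^ n * pochhammer (1 + a) (2 * n) / (fact n * pochhammer (1 + a) n)
         * hypF [- of_nat n, (1 + a - b) / 2, (2 + a - b) / 2, 1]
                [1 + a - b, 1 - b - of_nat n, 1 + a + of_nat n] 4"
    unfolding pre hF by (simp add: sum_distrib_left)
  finally show ?thesis .
qed

end
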